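(* Let $\mathsf{N}_\mathsf{F}:=\mathsf{L}_\mathsf{F}\mathsf{K}_\mathsf{F}$ be a system of $N=L+K$ local fermionic modes, with the Jordan–Wigner isomorphism $J$ defined by an ordering in which the $L$ modes of $\mathsf{L}_\mathsf{F}$ come first. Let $\mathcal{C}$ be a fermionic transformation from $\mathsf{N}_\mathsf{F}$ to $\mathsf{N}_\mathsf{F}$ with a single Kraus operator $C$ such that $J(C)=U\otimes I_{\mathsf{K}_\mathsf{F}}$, where $U$ acts on the first $L$ qubits and $I_{\mathsf{K}_\mathsf{F}}$ is the identity on the last $K$ qubits. Then $\mathcal{C}$ is local on the first $L$ modes, i.e. $C$ is a linear combination of products of field operators of the modes of $\mathsf{L}_\mathsf{F}$ only.
   Context: A system of $N$ local fermionic modes is described by field operators $\varphi_1,\dots,\varphi_N$ with $\{\varphi_i,\varphi_j^\dagger\}=\delta_{ij}I$, $\{\varphi_i,\varphi_j\}=0$. Given an ordering of the modes, the Jordan–Wigner isomorphism identifies the Fock basis $(\varphi_1^\dagger)^{n_1}\cdots(\varphi_N^\dagger)^{n_N}|\Omega\rangle$ with the computational basis of $N$ qubits, with $J(\varphi_i)=(\bigotimes_{l<i}\sigma^z_l)\otimes\sigma^-_i\otimes(\bigotimes_{k>i}I_k)$, extended linearly and multiplicatively with $J(X^\dagger)=J(X)^\dagger$. Fermionic transformations are completely positive maps whose Kraus operators each are linear combinations of products of field operators with either all an even or all an odd number of factors. *)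

theory Defs
  imports "Jordan_Normal_Form.Schur_Decomposition"
begin

(* Kronecker (tensor) product of matrices, standard ordering:
   the first factor carries the most significant index. *)
definition kron :: "complex mat \<Rightarrow> complex mat \<Rightarrow> complex mat" where
  "kron A B = mat (dim_row A * dim_row B) (dim_col A * dim_col B)
     (\<lambda>(i,j). A $$ (i div dim_row B, j div dim_col B) * B $$ (i mod dim_row B, j mod dim_col B))"

definition sigma_z :: "complex mat" where
  "sigma_z = mat 2 2 (\<lambda>(i,j). if i = j then (if i = 0 then 1 else -1) else 0)"

definition sigma_minus :: "complex mat" where
  "sigma_minus = mat 2 2 (\<lambda>(i,j). if i = 0 \<and> j = 1 then 1 else 0)"

fun sz_pow :: "nat \<Rightarrow> complex mat" where
  "sz_pow 0 = 1\<^sub>m 1"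
| "sz_pow (Suc n) = kron (sz_pow n) sigma_z"

(* Jordan-Wigner image of the annihilation operator of mode i (0-indexed, i < N)
   in a system of N modes:  (sigma^z)^{\<otimes> i} \<otimes> sigma^- \<otimes> I^{\<otimes>(N-1-i)} *)
definition jw_ann :: "nat \<Rightarrow> nat \<Rightarrow> complex mat" where
  "jw_ann N i = kron (kron (sz_pow i) sigma_minus) (1\<^sub>m (2 ^ (N - 1 - i)))"

definition field_ops :: "nat \<Rightarrow> nat set \<Rightarrow> complex mat set" where
  "field_ops N S = {jw_ann N i | i. i \<in> S} \<union> {mat_adjoint (jw_ann N i) | i. i \<in> S}"

fun prod_word :: "nat \<Rightarrow> complex mat list \<Rightarrow> complex mat" where
  "prod_word d [] = 1\<^sub>m d"
| "prod_word d (x # xs) = x * prod_word d xs"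

definition field_products :: "nat \<Rightarrow> nat set \<Rightarrow> complex mat set" where
  "field_products N S = {prod_word (2 ^ N) ws | ws. set ws \<subseteq> field_ops N S}"

definition even_products :: "nat \<Rightarrow> complex mat set" where
  "even_products N = {prod_word (2 ^ N) ws | ws. set ws \<subseteq> field_ops N {..<N} \<and> even (length ws)}"

definition odd_products :: "nat \<Rightarrow> complex mat set" where
  "odd_products N = {prod_word (2 ^ N) ws | ws. set ws \<subseteq> field_ops N {..<N} \<and> odd (length ws)}"

inductive_set lin_span :: "nat \<Rightarrow> complex mat set \<Rightarrow> complex mat set" for d G where
  zero: "0\<^sub>m d d \<in> lin_span d G"
| gen: "g \<in> G \<Longrightarrow> g \<in> lin_span d G"
| add: "a \<in> lin_span d G \<Longrightarrow> b \<in> lin_span d G \<Longrightarrow> a + b \<in> lin_span d G"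
| smult: "a \<in> lin_span d G \<Longrightarrow> c \<cdot>\<^sub>m a \<in> lin_span d G"

end

theory Submission
  imports Defs
begin

lemma sum_split_nat: "(\<Sum>k<m*n. f k) = ((\<Sum>p<m. \<Sum>q<n. f (p*n+q::nat)) :: 'a::comm_monoid_add)"
proof (induction m)
  case 0 then show ?case by simp
next
  case (Suc m)
  have "{..<Suc m * n} = {..<m*n} \<union> {m*n..<m*n+n}" by auto
  moreover have "(\<Sum>k\<in>{m*n..<m*n+n}. f k) = (\<Sum>q<n. f (m*n+q))"
    by (simp add: sum.shift_bounds_nat_ivl[symmetric] lessThan_atLeast0 add.commute)
  ultimately show ?case using Suc by (simp add: sum.union_disjoint ivl_disj_int)
qed

lemma kron_index:
  assumes "i < dim_row A * dim_row B" "j < dim_col A * dim_col B"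
  shows "kron A B $$ (i,j) = A $$ (i div dim_row B, j div dim_col B) * B $$ (i mod dim_row B, j mod dim_col B)"
  using assms by (simp add: kron_def)

lemma kron_dims[simp]: "dim_row (kron A B) = dim_row A * dim_row B" "dim_col (kron A B) = dim_col A * dim_col B"
  by (simp_all add: kron_def)

lemma div_lt_helper: "i < a * (b::nat) \<Longrightarrow> i div b < a"
  by (simp add: less_mult_imp_div_less)
lemma mod_lt_helper: "i < a * (b::nat) \<Longrightarrow> i mod b < b"
  by (metis mod_less_divisor mult_zero_right not_less_zero gr0I)

lemma kron_mult:
  assumes "dim_col A = dim_row C" "dim_col B = dim_row D"
  shows "kron A B * kron C D = kron (A * C) (B * D)"
proof (rule eq_matI)
  fix i j assume i: "i < dim_row (kron (A * C) (B * D))" and j: "j < dim_col (kron (A * C) (B * D))"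
  let ?n = "dim_col B"
  have i1: "i div dim_row B < dim_row A" "i mod dim_row B < dim_row B"
    using i by (auto intro: div_lt_helper mod_lt_helper)
  have j1: "j div dim_col D < dim_col C" "j mod dim_col D < dim_col D"
    using j by (auto intro: div_lt_helper mod_lt_helper)
  have "(kron A B * kron C D) $$ (i,j) = (\<Sum>k<dim_col A * ?n.
     A $$ (i div dim_row B, k div ?n) * B $$ (i mod dim_row B, k mod ?n) *
     (C $$ (k div dim_row D, j div dim_col D) * D $$ (k mod dim_row D, j mod dim_col D)))"
    using i j assms
    by (simp add: times_mat_def scalar_prod_def kron_def lessThan_atLeast0 mult.commute)
  also have "\<dots> = (\<Sum>p<dim_col A. \<Sum>q<?n.
     A $$ (i div dim_row B, p) * C $$ (p, j div dim_col D) * (B $$ (i mod dim_row B, q) * D $$ (q, j mod dim_col D)))"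
    unfolding sum_split_nat using assms
    by (intro sum.cong refl) (simp add: mult_ac)
  also have "\<dots> = (A*C) $$ (i div dim_row B, j div dim_col D) * (B * D) $$ (i mod dim_row B, j mod dim_col D)"
    using i1 j1 assms
    by (simp add: times_mat_def scalar_prod_def sum_product lessThan_atLeast0 mult_ac)
  finally show "(kron A B * kron C D) $$ (i,j) = kron (A * C) (B * D) $$ (i,j)"
    using i j by (simp add: kron_def)
qed (simp_all add: kron_def)

lemma idx_helper:
  assumes "i < a * b * (c::nat)"
  shows "i div (b*c) = i div c div b" "(i mod (b*c)) div c = (i div c) mod b" "(i mod (b*c)) mod c = i mod c"
proof -
  have c: "c > 0" using assms by (cases c) auto
  have "i div (b*c) = i div (c*b)" by (simp add: mult.commute)
  also have "\<dots> = i div c div b" by (rule div_mult2_eq)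
  finally show "i div (b*c) = i div c div b" .
  have e: "i mod (b*c) = c * (i div c mod b) + i mod c"
    using mod_mult2_eq[of i c b] by (simp add: mult.commute)
  show "(i mod (b*c)) div c = (i div c) mod b" unfolding e using c by simp
  show "(i mod (b*c)) mod c = i mod c" unfolding e by simp
qed


lemma kron_assoc: "kron (kron A B) C = kron A (kron B C)"
proof (rule eq_matI)
  fix i j assume i: "i < dim_row (kron A (kron B C))" and j: "j < dim_col (kron A (kron B C))"
  have i': "i < dim_row A * dim_row B * dim_row C" using i by (simp add: mult.assoc)
  have j': "j < dim_col A * dim_col B * dim_col C" using j by (simp add: mult.assoc)
  have i2: "i div dim_row C < dim_row A * dim_row B" using i' by (intro div_lt_helper)
  have j2: "j div dim_col C < dim_col A * dim_col B" using j' by (intro div_lt_helper)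
  have i3: "i mod (dim_row B * dim_row C) < dim_row B * dim_row C" using i by (intro mod_lt_helper) simp
  have j3: "j mod (dim_col B * dim_col C) < dim_col B * dim_col C" using j by (intro mod_lt_helper) simp
  show "kron (kron A B) C $$ (i, j) = kron A (kron B C) $$ (i, j)"
    using i i' j j' i2 j2 i3 j3
    by (simp add: kron_index idx_helper[OF i'] idx_helper[OF j'] mult.assoc)
qed (simp_all add: mult.assoc)

lemma kron_add_left:
  assumes "A \<in> carrier_mat r c" "A' \<in> carrier_mat r c"
  shows "kron (A + A') B = kron A B + kron A' B"
proof (rule eq_matI)
  fix i j assume i: "i < dim_row (kron A B + kron A' B)" and j: "j < dim_col (kron A B + kron A' B)"
  have "i div dim_row B < r" "j div dim_col B < c" using i j assms by (auto intro: div_lt_helper)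
  then show "kron (A + A') B $$ (i, j) = (kron A B + kron A' B) $$ (i, j)"
    using i j assms by (simp add: kron_def distrib_right)
qed (use assms in auto)

lemma kron_one: "kron (1\<^sub>m a) (1\<^sub>m b) = 1\<^sub>m (a*b)"
proof (rule eq_matI)
  fix i j assume i: "i < dim_row (1\<^sub>m (a*b))" and j: "j < dim_col (1\<^sub>m (a*b))"
  then have b: "b > 0" by (cases b) auto
  have "(i div b = j div b \<and> i mod b = j mod b) = (i = j)"
    by (metis div_mult_mod_eq)
  moreover have "i div b < a" "j div b < a" using i j by (auto intro: div_lt_helper)
  ultimately show "kron (1\<^sub>m a) (1\<^sub>m b) $$ (i, j) = 1\<^sub>m (a*b) $$ (i, j)"
    using i j b by (auto simp: kron_def)
qed simp_all

lemma adjoint_index: "mat_adjoint A = mat (dim_col A) (dim_row A) (\<lambda>(i,j). conjugate (A $$ (j,i)))"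
  by (rule eq_matI) (auto simp: mat_adjoint_def mat_of_rows_def)

lemma kron_adjoint: "mat_adjoint (kron A B) = kron (mat_adjoint A) (mat_adjoint B)"
proof (rule eq_matI)
  fix i j assume i: "i < dim_row (kron (mat_adjoint A) (mat_adjoint B))" and j: "j < dim_col (kron (mat_adjoint A) (mat_adjoint B))"
  then have i': "i < dim_col A * dim_col B" and j': "j < dim_row A * dim_row B" by (simp_all add: adjoint_index)
  have "i div dim_col B < dim_col A" "j div dim_row B < dim_row A" "i mod dim_col B < dim_col B" "j mod dim_row B < dim_row B"
    using i' j' by (auto intro: div_lt_helper mod_lt_helper)
  then show "mat_adjoint (kron A B) $$ (i, j) = kron (mat_adjoint A) (mat_adjoint B) $$ (i, j)"
    using i' j' by (simp add: adjoint_index kron_def)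
qed (simp_all add: adjoint_index)

lemma sigma_z_carrier[simp]: "sigma_z \<in> carrier_mat 2 2" by (simp add: sigma_z_def)
lemma sigma_minus_carrier[simp]: "sigma_minus \<in> carrier_mat 2 2" by (simp add: sigma_minus_def)

lemma less2: "(i::nat) < 2 \<longleftrightarrow> i = 0 \<or> i = 1" by auto

lemma sum2: "(\<Sum>k<2. f k) = f 0 + f (1::nat)"
  by (simp add: numeral_2_eq_2)

lemma sigma_z_sq: "sigma_z * sigma_z = 1\<^sub>m 2"
  by (rule eq_matI) (auto simp: sigma_z_def times_mat_def scalar_prod_def lessThan_atLeast0[symmetric] sum2 less2)

lemma sigma_z_adj: "mat_adjoint sigma_z = sigma_z"
  by (rule eq_matI) (auto simp: sigma_z_def adjoint_index less2)

lemma one_adj: "mat_adjoint (1\<^sub>m n) = (1\<^sub>m n :: complex mat)"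
  by (rule eq_matI) (auto simp: adjoint_index)

lemma sz_t2: "dim_row (sz_pow (Suc n)) = dim_row (sz_pow n) * 2" "dim_col (sz_pow (Suc n)) = dim_col (sz_pow n) * 2"
  by (simp_all add: kron_def sigma_z_def)
lemma sz_t0: "dim_row (sz_pow 0) = 1" "dim_col (sz_pow 0) = 1" by simp_all
lemma sz_t3: "dim_row (sz_pow n) = 2^n \<and> dim_col (sz_pow n) = 2^n"
proof (induction n)
  case 0 show ?case by (simp only: sz_t0 power_0 simp_thms)
next
  case (Suc n) show ?case by (simp only: sz_t2 Suc power_Suc2 simp_thms)
qed
lemma sz_pow_carrier[simp]: "sz_pow n \<in> carrier_mat (2^n) (2^n)"
  using sz_t3 by (intro carrier_matI) auto

lemma sz_pow_sq: "sz_pow n * sz_pow n = 1\<^sub>m (2^n)"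
proof (induction n)
  case 0 then show ?case by simp
next
  case (Suc n)
  have "sz_pow (Suc n) * sz_pow (Suc n) = kron (sz_pow n * sz_pow n) (sigma_z * sigma_z)"
    unfolding sz_pow.simps by (rule kron_mult) (simp_all add: carrier_matD[OF sz_pow_carrier] sigma_z_def)
  also have "\<dots> = 1\<^sub>m (2^Suc n)" by (simp only: Suc sigma_z_sq kron_one power_Suc2)
  finally show ?case .
qed

lemma sz_pow_adj: "mat_adjoint (sz_pow n) = sz_pow n"
proof (induction n)
  case 0 show ?case by (simp only: sz_pow.simps one_adj)
next
  case (Suc n) show ?case by (simp only: sz_pow.simps kron_adjoint sigma_z_adj Suc)
qed

lemma span_carrier:
  assumes "G \<subseteq> carrier_mat d d" "x \<in> lin_span d G"
  shows "x \<in> carrier_mat d d"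
  using assms(2) by induction (use assms(1) in auto)

lemma span_mono:
  assumes "G \<subseteq> G'" "x \<in> lin_span d G"
  shows "x \<in> lin_span d G'"
  using assms(2) by induction (use assms(1) in \<open>auto intro: lin_span.intros\<close>)

lemma sz_dims[simp]: "dim_row (sz_pow n) = 2^n" "dim_col (sz_pow n) = 2^n"
  using sz_t3 by auto

lemma jw_ann_carrier: "i < N \<Longrightarrow> jw_ann N i \<in> carrier_mat (2^N) (2^N)"
proof -
  assume i: "i < N"
  have e: "(2::nat)^i * 2 * 2^(N - 1 - i) = 2^N"
  proof -
    have "(2::nat)^i * 2 * 2^(N - 1 - i) = 2^(i + 1 + (N - 1 - i))" by (simp only: power_add power_one_right)
    also have "i + 1 + (N - 1 - i) = N" using i by simp
    finally show ?thesis .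
  qed
  have "dim_row (jw_ann N i) = (2::nat)^i * 2 * 2^(N - 1 - i)" "dim_col (jw_ann N i) = (2::nat)^i * 2 * 2^(N - 1 - i)"
    by (simp_all add: jw_ann_def sigma_minus_def)
  then show ?thesis unfolding e by (intro carrier_matI)
qed

lemma adjoint_carrier: "A \<in> carrier_mat n m \<Longrightarrow> mat_adjoint A \<in> carrier_mat m n"
  unfolding adjoint_index carrier_mat_def by simp

lemma field_ops_carrier: "S \<subseteq> {..<N} \<Longrightarrow> field_ops N S \<subseteq> carrier_mat (2^N) (2^N)"
proof
  fix x assume S: "S \<subseteq> {..<N}" and x: "x \<in> field_ops N S"
  then obtain i where i: "i < N" and "x = jw_ann N i \<or> x = mat_adjoint (jw_ann N i)"
    unfolding field_ops_def by blast
  then show "x \<in> carrier_mat (2^N) (2^N)" using jw_ann_carrier[OF i] adjoint_carrier by blast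
qed

lemma prod_word_carrier: "set ws \<subseteq> carrier_mat d d \<Longrightarrow> prod_word d ws \<in> carrier_mat d d"
  by (induction ws) auto

lemma prod_word_snoc: "set ws \<subseteq> carrier_mat d d \<Longrightarrow> g \<in> carrier_mat d d \<Longrightarrow>
   prod_word d (ws @ [g]) = prod_word d ws * g"
proof (induction ws)
  case Nil then show ?case by simp
next
  case (Cons x ws)
  then have "prod_word d (ws @ [g]) = prod_word d ws * g" by simp
  moreover have "x \<in> carrier_mat d d" "prod_word d ws \<in> carrier_mat d d" using Cons.prems prod_word_carrier by auto
  ultimately show ?case using Cons.prems by simp
qed

lemma field_products_carrier: "S \<subseteq> {..<N} \<Longrightarrow> field_products N S \<subseteq> carrier_mat (2^N) (2^N)"
proof
  fix x assume S: "S \<subseteq> {..<N}" and "x \<in> field_products N S"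
  then obtain ws where ws: "x = prod_word (2^N) ws" "set ws \<subseteq> field_ops N S"
    unfolding field_products_def by blast
  have "set ws \<subseteq> carrier_mat (2^N) (2^N)" using ws(2) field_ops_carrier[OF S] by (rule order_trans)
  then show "x \<in> carrier_mat (2^N) (2^N)" unfolding ws(1) by (rule prod_word_carrier)
qed

lemma span_mult_right:
  assumes S: "S \<subseteq> {..<N}" and g: "g \<in> field_ops N S"
    and x: "x \<in> lin_span (2^N) (field_products N S)"
  shows "x * g \<in> lin_span (2^N) (field_products N S)"
proof -
  have gc: "g \<in> carrier_mat (2^N) (2^N)" using field_ops_carrier[OF S] g by blast
  have Gc: "field_products N S \<subseteq> carrier_mat (2^N) (2^N)" using field_products_carrier[OF S] .
  from x show ?thesis
  proof induction
    case zero
    have "0\<^sub>m (2^N) (2^N) * g = 0\<^sub>m (2^N) (2^N)" using gc by (rule left_mult_zero_mat)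
    then show ?case using lin_span.zero by metis
  next
    case (gen h)
    then obtain ws where ws: "h = prod_word (2^N) ws" "set ws \<subseteq> field_ops N S"
      unfolding field_products_def by blast
    have wc: "set ws \<subseteq> carrier_mat (2^N) (2^N)" using ws(2) field_ops_carrier[OF S] by (rule order_trans)
    have "h * g = prod_word (2^N) (ws @ [g])"
      unfolding ws(1) using prod_word_snoc[OF wc gc] by simp
    moreover have "set (ws @ [g]) \<subseteq> field_ops N S" using ws g by simp
    ultimately have "h * g \<in> field_products N S" unfolding field_products_def by blast
    then show ?case by (rule lin_span.gen)
  next
    case (add a b)
    have "a \<in> carrier_mat (2^N) (2^N)" "b \<in> carrier_mat (2^N) (2^N)"
      using add.hyps span_carrier[OF Gc] by blast+
    then have "(a + b) * g = a * g + b * g" using gc by (rule add_mult_distrib_mat)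
    then show ?case using add.IH lin_span.add by metis
  next
    case (smult a c)
    have "a \<in> carrier_mat (2^N) (2^N)" using smult.hyps span_carrier[OF Gc] by blast
    then have "(c \<cdot>\<^sub>m a) * g = c \<cdot>\<^sub>m (a * g)" using gc by (rule mult_smult_assoc_mat)
    then show ?case using smult.IH lin_span.smult by metis
  qed
qed


definition eu :: "nat \<Rightarrow> nat \<Rightarrow> complex mat" where
  "eu a b = mat 2 2 (\<lambda>(i,j). if i = a \<and> j = b then 1 else 0)"

lemma eu_carrier[simp]: "eu a b \<in> carrier_mat 2 2" by (simp add: eu_def)
lemma eu_dims[simp]: "dim_row (eu a b) = 2" "dim_col (eu a b) = 2" by (simp_all add: eu_def)

lemma sm_eu: "sigma_minus = eu 0 1"
  by (rule eq_matI) (auto simp: sigma_minus_def eu_def)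

lemma sp_eu: "mat_adjoint sigma_minus = eu 1 0"
  by (rule eq_matI) (auto simp: sigma_minus_def eu_def adjoint_index less2)

lemma eu_mult: "b < 2 \<Longrightarrow> eu a b * eu b c = eu a c"
  by (rule eq_matI) (auto simp: eu_def times_mat_def scalar_prod_def lessThan_atLeast0[symmetric] sum2 less2)

definition blk :: "nat \<Rightarrow> complex mat \<Rightarrow> nat \<Rightarrow> nat \<Rightarrow> complex mat" where
  "blk L U a b = mat (2^L) (2^L) (\<lambda>(i,j). U $$ (2*i+a, 2*j+b))"

lemma blk_carrier[simp]: "blk L U a b \<in> carrier_mat (2^L) (2^L)" by (simp add: blk_def)
lemma blk_dims[simp]: "dim_row (blk L U a b) = 2^L" "dim_col (blk L U a b) = 2^L" by (simp_all add: blk_def)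

lemma blk_entry:
  assumes i: "i < 2^L * 2" and j: "j < 2^L * 2" and ab: "a < 2" "b < 2"
  shows "kron (blk L U a b) (eu a b) $$ (i,j) = (if i mod 2 = a \<and> j mod 2 = b then U $$ (i,j) else 0)"
proof -
  have d: "i div 2 < 2^L" "j div 2 < 2^L" using i j by (auto intro: div_lt_helper)
  have m: "i mod 2 < 2" "j mod 2 < 2" by auto
  have k: "kron (blk L U a b) (eu a b) $$ (i,j) = blk L U a b $$ (i div 2, j div 2) * eu a b $$ (i mod 2, j mod 2)"
    using kron_index[of i "blk L U a b" "eu a b" j] i j by simp
  have r: "2 * (i div 2) + i mod 2 = i" "2 * (j div 2) + j mod 2 = j" by simp_all
  show ?thesis unfolding k using d m r by (auto simp: blk_def eu_def)
qed

lemma decomp: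
  assumes U: "U \<in> carrier_mat (2^L * 2) (2^L * 2)"
  shows "U = kron (blk L U 0 0) (eu 0 0) + kron (blk L U 0 1) (eu 0 1) + kron (blk L U 1 0) (eu 1 0) + kron (blk L U 1 1) (eu 1 1)"
proof (rule eq_matI)
  fix i j assume i0: "i < dim_row (kron (blk L U 0 0) (eu 0 0) + kron (blk L U 0 1) (eu 0 1) + kron (blk L U 1 0) (eu 1 0) + kron (blk L U 1 1) (eu 1 1))"
    and j0: "j < dim_col (kron (blk L U 0 0) (eu 0 0) + kron (blk L U 0 1) (eu 0 1) + kron (blk L U 1 0) (eu 1 0) + kron (blk L U 1 1) (eu 1 1))"
  have i: "i < 2^L * 2" and j: "j < 2^L * 2" using i0 j0 by simp_all
  have m: "i mod 2 = 0 \<or> i mod 2 = 1" "j mod 2 = 0 \<or> j mod 2 = 1" by auto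
  show "U $$ (i, j) = (kron (blk L U 0 0) (eu 0 0) + kron (blk L U 0 1) (eu 0 1) + kron (blk L U 1 0) (eu 1 0) + kron (blk L U 1 1) (eu 1 1)) $$ (i, j)"
    using i j m by (auto simp: blk_entry)
qed (use U in simp_all)


lemma field_ops_mono: "S \<subseteq> T \<Longrightarrow> field_ops N S \<subseteq> field_ops N T"
  unfolding field_ops_def by blast

lemma field_products_mono: "S \<subseteq> T \<Longrightarrow> field_products N S \<subseteq> field_products N T"
  unfolding field_products_def using field_ops_mono by blast

lemma base_case:
  assumes U: "U \<in> carrier_mat (2^0) (2^0)"
  shows "kron U (1\<^sub>m (2^K)) \<in> lin_span (2^(0+K)) (field_products (0+K) {..<0})"
proof -
  have U1: "U \<in> carrier_mat 1 1" using U by simp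
  have "kron U (1\<^sub>m (2^K)) = U $$ (0,0) \<cdot>\<^sub>m prod_word (2^(0+K)) []"
  proof (rule eq_matI)
    fix i j assume i: "i < dim_row (U $$ (0,0) \<cdot>\<^sub>m prod_word (2^(0+K)) [])"
      and j: "j < dim_col (U $$ (0,0) \<cdot>\<^sub>m prod_word (2^(0+K)) [])"
    then have i': "i < 2^K" and j': "j < 2^K" by simp_all
    then show "kron U (1\<^sub>m (2^K)) $$ (i, j) = (U $$ (0,0) \<cdot>\<^sub>m prod_word (2^(0+K)) []) $$ (i, j)"
      using U1 by (simp add: kron_def)
  qed (use U1 in simp_all)
  moreover have "prod_word (2^(0+K)) [] \<in> field_products (0+K) {..<0}"
    unfolding field_products_def by (intro CollectI exI[of _ "[]"]) simp
  ultimately show ?thesis by (metis lin_span.gen lin_span.smult)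
qed

lemma main:
  "U \<in> carrier_mat (2^L) (2^L) \<Longrightarrow>
   kron U (1\<^sub>m (2^K)) \<in> lin_span (2^(L+K)) (field_products (L+K) {..<L})"
proof (induction L arbitrary: K U)
  case 0 then show ?case by (rule base_case)
next
  case (Suc L)
  define N where "N = Suc L + K"
  define Sp where "Sp = lin_span (2^N) (field_products N {..<Suc L})"
  define Z where "Z = sz_pow L"
  define IK where "IK = (1\<^sub>m (2^K) :: complex mat)"
  define a where "a = jw_ann N L"
  define ad where "ad = mat_adjoint a"
  define W where "W = (\<lambda>A X. kron A (kron X IK))"
  have Zc: "Z \<in> carrier_mat (2^L) (2^L)" unfolding Z_def by simp
  have IKc: "IK \<in> carrier_mat (2^K) (2^K)" unfolding IK_def by simp
  have SN: "{..<Suc L} \<subseteq> {..<N}" unfolding N_def by auto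
  have P: "W A (1\<^sub>m 2) \<in> Sp" if A: "A \<in> carrier_mat (2^L) (2^L)" for A
  proof -
    have h: "kron A (1\<^sub>m (2^Suc K)) \<in> lin_span (2^(L + Suc K)) (field_products (L + Suc K) {..<L})"
      using Suc.IH[OF A] .
    have e1: "L + Suc K = N" unfolding N_def by simp
    have e2: "kron (1\<^sub>m 2) IK = 1\<^sub>m (2^Suc K)" unfolding IK_def kron_one by (simp only: power_Suc)
    have "kron A (1\<^sub>m (2^Suc K)) \<in> lin_span (2^N) (field_products N {..<L})" using h unfolding e1 .
    then have "kron A (1\<^sub>m (2^Suc K)) \<in> Sp" unfolding Sp_def
      by (rule span_mono[rotated]) (rule field_products_mono, auto)
    then show ?thesis unfolding W_def e2 .
  qed
  have NK: "N - 1 - L = K" unfolding N_def by simp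
  have a_eq: "a = kron Z (kron sigma_minus IK)"
    unfolding a_def jw_ann_def NK Z_def IK_def by (rule kron_assoc)
  have ad_eq: "ad = kron Z (kron (mat_adjoint sigma_minus) IK)"
    unfolding ad_def a_eq kron_adjoint Z_def sz_pow_adj IK_def one_adj ..
  have a_in: "a \<in> field_ops N {..<Suc L}" unfolding a_def field_ops_def by blast
  have ad_in: "ad \<in> field_ops N {..<Suc L}" unfolding ad_def a_def field_ops_def by blast
  have ZZ: "A * Z * Z = A" if A: "A \<in> carrier_mat (2^L) (2^L)" for A
  proof -
    have "A * Z * Z = A * (Z * Z)" by (rule assoc_mult_mat[OF A Zc Zc])
    also have "Z * Z = 1\<^sub>m (2^L)" unfolding Z_def by (rule sz_pow_sq)
    finally show ?thesis using A by simp
  qed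
  have M: "W B X * kron Z (kron Y IK) = W (B * Z) (X * Y)"
    if B: "B \<in> carrier_mat (2^L) (2^L)" and X: "X \<in> carrier_mat 2 2" and Y: "Y \<in> carrier_mat 2 2" for B X Y
  proof -
    have "W B X * kron Z (kron Y IK) = kron (B * Z) (kron X IK * kron Y IK)"
      unfolding W_def using B X Y Zc IKc by (intro kron_mult) auto
    also have "kron X IK * kron Y IK = kron (X * Y) (IK * IK)"
      using X Y IKc by (intro kron_mult) auto
    also have "IK * IK = IK" unfolding IK_def by simp
    finally show ?thesis unfolding W_def .
  qed
  have Q: "W (A * Z) (X * Y) \<in> Sp"
    if A: "A \<in> carrier_mat (2^L) (2^L)" and X: "X \<in> carrier_mat 2 2" and Y: "Y \<in> {sigma_minus, mat_adjoint sigma_minus}"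
      and w: "W A X \<in> Sp" for A X Y
  proof -
    have Yc: "Y \<in> carrier_mat 2 2" using Y adjoint_carrier[OF sigma_minus_carrier] by auto
    have g: "kron Z (kron Y IK) \<in> field_ops N {..<Suc L}" using Y a_in ad_in a_eq ad_eq by auto
    have "W A X * kron Z (kron Y IK) \<in> Sp"
      unfolding Sp_def using span_mult_right[OF SN g] w unfolding Sp_def .
    then show ?thesis using M[OF A X Yc] by simp
  qed
  have smc: "mat_adjoint sigma_minus \<in> carrier_mat 2 2" using adjoint_carrier[OF sigma_minus_carrier] .
  have T: "W A (eu x y) \<in> Sp" if A: "A \<in> carrier_mat (2^L) (2^L)" and xy: "x < 2" "y < 2" for A x y
  proof -
    have AZ: "A * Z \<in> carrier_mat (2^L) (2^L)" using A Zc by simp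
    have one_l: "1\<^sub>m 2 * X = X" if "X \<in> carrier_mat 2 2" for X :: "complex mat" using that by simp
    have s1: "W (A * Z) sigma_minus \<in> Sp"
      using Q[OF A _ _ P[OF A], of sigma_minus] one_l by simp
    have s2: "W (A * Z) (mat_adjoint sigma_minus) \<in> Sp"
      using Q[OF A _ _ P[OF A], of "mat_adjoint sigma_minus"] one_l[OF smc] by simp
    have s3: "W A sigma_minus \<in> Sp"
      using Q[OF AZ _ _ P[OF AZ], of sigma_minus] one_l ZZ[OF A] by simp
    have s4: "W A (mat_adjoint sigma_minus) \<in> Sp"
      using Q[OF AZ _ _ P[OF AZ], of "mat_adjoint sigma_minus"] one_l[OF smc] ZZ[OF A] by simp
    have s5: "W A (sigma_minus * mat_adjoint sigma_minus) \<in> Sp"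
      using Q[OF AZ _ _ s1, of "mat_adjoint sigma_minus"] ZZ[OF A] by simp
    have s6: "W A (mat_adjoint sigma_minus * sigma_minus) \<in> Sp"
      using Q[OF AZ smc _ s2, of sigma_minus] ZZ[OF A] by simp
    have e00: "sigma_minus * mat_adjoint sigma_minus = eu 0 0" unfolding sm_eu sp_eu[unfolded sm_eu] by (rule eu_mult) simp
    have e11: "mat_adjoint sigma_minus * sigma_minus = eu 1 1" unfolding sm_eu sp_eu[unfolded sm_eu] by (rule eu_mult) simp
    have "x = 0 \<or> x = 1" "y = 0 \<or> y = 1" using xy by auto
    then show ?thesis using s3 s4 s5[unfolded e00] s6[unfolded e11] unfolding sm_eu sp_eu[unfolded sm_eu] by auto
  qed
  have Uc: "U \<in> carrier_mat (2^L*2) (2^L*2)" using Suc.prems by (simp only: power_Suc2)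
  define k where "k = (\<lambda>x y. kron (blk L U x y) (eu x y))"
  have kc: "k x y \<in> carrier_mat (2^L*2) (2^L*2)" for x y unfolding k_def by (intro carrier_matI) simp_all
  have dec: "U = k 0 0 + k 0 1 + k 1 0 + k 1 1" unfolding k_def by (rule decomp[OF Uc])
  have kW: "kron (k x y) IK = W (blk L U x y) (eu x y)" for x y unfolding k_def W_def by (rule kron_assoc)
  have "kron U IK = kron (k 0 0) IK + kron (k 0 1) IK + kron (k 1 0) IK + kron (k 1 1) IK"
    unfolding dec using kc
    by (simp add: kron_add_left[of _ "2^L*2" "2^L*2"] add_carrier_mat)
  also have "\<dots> \<in> Sp" unfolding kW
    by (intro lin_span.add[of _ "2^N" "field_products N {..<Suc L}", folded Sp_def] T blk_carrier) simp_all
  finally show ?case unfolding IK_def Sp_def N_def .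
qed


theorem lemma3:
  fixes L K :: nat and U C :: "complex mat"
  assumes U: "U \<in> carrier_mat (2 ^ L) (2 ^ L)"
    and parity: "C \<in> lin_span (2 ^ (L + K)) (even_products (L + K))
               \<or> C \<in> lin_span (2 ^ (L + K)) (odd_products (L + K))"
    and JC: "C = kron U (1\<^sub>m (2 ^ K))"
  shows "C \<in> lin_span (2 ^ (L + K)) (field_products (L + K) {..<L})"
  unfolding JC using U by (rule main)

end
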